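(* For any $n\in\mathbb{N}$, $(\mathcal{A}_n,L)$ is an automatic structure for $\mathrm{rps}_n$, where $L=\bigcup_{B\subseteq\mathcal{A}_n}L^B$, with $L^\emptyset=\{\varepsilon\}$, $L^B=L^{(a_1)}L^{(a_2)}\cdots L^{(a_k)}$ for $B=\{a_1<\cdots<a_k\}\neq\emptyset$, and $L^{(j)}=\{n\}^*\{n-1\}^*\cdots\{j+1\}^*\{j\}^+$ for $j\in\mathcal{A}_n$.
   Context: Let $\mathcal{A}_n=\{1<2<\cdots<n\}$. An rPS tableau is a finite (possibly empty) sequence of nonempty bottom-justified columns of boxes filled with positive integers, such that the entries of each column are weakly decreasing from top to bottom and the bottom entries of the columns form a strictly increasing sequence from left to right. Right insertion of a symbol $a$ into an rPS tableau $B$: if $a$ is strictly greater than every entry of the bottom row, append a new column consisting of $a$ at the right end; otherwise, let $z$ be the leftmost bottom-row entry with $z\geq a$ and put $a$ in a new box at the bottom of the column of $z$ (the previous entries of that column move up one box). For $w=w_1\cdots w_k$, $\mathfrak{R}_r(w)$ is obtained by starting with the empty tableau and right-inserting $w_1,\dots,w_k$ in order. The monoid $\mathrm{rps}_n$ is the quotient of $\mathcal{A}_n^*$ by the congruence $u\equiv v\iff\mathfrak{R}_r(u)=\mathfrak{R}_r(v)$; words are identified with the elements they represent. For an alphabet $\Sigma$ and a padding symbol $\$\notin\Sigma$, $\delta_R:\Sigma^*\times\Sigma^*\to((\Sigma\cup\{\$\})\times(\Sigma\cup\{\$\}))^*$ sends $(u_1\cdots u_m,v_1\cdots v_p)$ to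 the word of pairs $(u_i,v_i)$ obtained after padding the shorter word on the right with $\$$'s to equal length; $\delta_L$ is the same with padding on the left. For a monoid $M$ generated by finite $\Sigma$ and a regular language $L\subseteq\Sigma^*$ mapping onto $M$, define $L_a=\{(u,v)\in L\times L: ua=_M v\}$ and ${}_aL=\{(u,v)\in L\times L: au=_M v\}$. $(\Sigma,L)$ is an automatic structure for $M$ if $(L_a)\delta_R$ is a regular language for every $a\in\Sigma\cup\{\varepsilon\}$. *)

theory Defs
  imports Main
begin

definition regular_lang :: "'a set \<Rightarrow> 'a list set \<Rightarrow> bool" where
  "regular_lang Gamma L \<longleftrightarrow>
     (\<exists>(Q::nat set) (dl::nat \<Rightarrow> 'a \<Rightarrow> nat) q0 F.
        finite Q \<and> q0 \<in> Q \<and> F \<subseteq> Q \<and>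
        (\<forall>q\<in>Q. \<forall>a\<in>Gamma. dl q a \<in> Q) \<and>
        L = {w \<in> lists Gamma. foldl dl q0 w \<in> F})"

section \<open>Padded convolution delta_R (padding symbol \$ rendered as None)\<close>

definition padR :: "nat \<Rightarrow> 'a list \<Rightarrow> 'a option list" where
  "padR m u = map Some u @ replicate (m - length u) None"

definition deltaR :: "'a list \<Rightarrow> 'a list \<Rightarrow> ('a option \<times> 'a option) list" where
  "deltaR u v = (let m = max (length u) (length v) in zip (padR m u) (padR m v))"

text \<open>A monoid M generated by the finite set Sg is presented by the relation eqM on
  words over Sg (u =_M v). Generators a range over Sg together with the empty word.\<close>
definition L_right :: "('a list \<Rightarrow> 'a list \<Rightarrow> bool) \<Rightarrow> 'a list set \<Rightarrow> 'a list \<Rightarrow> ('a list \<times> 'a list) set" where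
  "L_right eqM L a = {(u, v). u \<in> L \<and> v \<in> L \<and> eqM (u @ a) v}"

definition automatic_structure ::
  "'a set \<Rightarrow> ('a list \<Rightarrow> 'a list \<Rightarrow> bool) \<Rightarrow> 'a list set \<Rightarrow> bool" where
  "automatic_structure Sg eqM L \<longleftrightarrow>
     finite Sg \<and> L \<subseteq> lists Sg \<and> regular_lang Sg L \<and>
     (\<forall>w \<in> lists Sg. \<exists>u \<in> L. eqM u w) \<and>
     (\<forall>a \<in> insert [] ((\<lambda>x. [x]) ` Sg).
        regular_lang (insert None (Some ` Sg) \<times> insert None (Some ` Sg))
          ((\<lambda>(u, v). deltaR u v) ` L_right eqM L a))"

text \<open>An rPS tableau is a list of columns (left to right); each column is a nonempty list
  written from the bottom entry upwards (so the head is the bottom-row entry).\<close>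
type_synonym rps_tableau = "nat list list"

fun rins :: "rps_tableau \<Rightarrow> nat \<Rightarrow> rps_tableau" where
  "rins [] a = [[a]]"
| "rins (c # cs) a = (if a \<le> hd c then (a # c) # cs else c # rins cs a)"

definition rR :: "nat list \<Rightarrow> rps_tableau" where
  "rR w = foldl rins [] w"

definition rps_eq :: "nat list \<Rightarrow> nat list \<Rightarrow> bool" where
  "rps_eq u v \<longleftrightarrow> rR u = rR v"

abbreviation alphA :: "nat \<Rightarrow> nat set" where
  "alphA n \<equiv> {1..n}"

definition Lcol :: "nat \<Rightarrow> nat \<Rightarrow> nat list set" where
  "Lcol n j = {concat (map (\<lambda>i. replicate (e i) i) (rev [j..<Suc n])) | e. e j \<ge> 1}"

fun concL :: "'a list set list \<Rightarrow> 'a list set" where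
  "concL [] = {[]}"
| "concL (A # As) = {u @ v | u v. u \<in> A \<and> v \<in> concL As}"

definition LB :: "nat \<Rightarrow> nat set \<Rightarrow> nat list set" where
  "LB n B = concL (map (Lcol n) (sorted_list_of_set B))"

definition Lrps :: "nat \<Rightarrow> nat list set" where
  "Lrps n = (\<Union>B \<in> Pow (alphA n). LB n B)"

end

theory Submission
  imports Defs
begin


lemma regI:
  fixes d :: "'s \<Rightarrow> 'a \<Rightarrow> 's"
  assumes fin: "finite S" and sI: "sI \<in> S" and cl: "\<forall>s\<in>S. \<forall>x\<in>G. d s x \<in> S"
    and L: "L = {w \<in> lists G. acc (foldl d sI w)}"
  shows "regular_lang G L"
proof -
  obtain m and g :: "nat \<Rightarrow> 's" where S: "S = g ` {i. i < m}" and ig: "inj_on g {i. i < m}"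
    using finite_imp_nat_seg_image_inj_on[OF fin] by blast
  define f where "f = inv_into {i. i < m} g"
  have fg: "g (f s) = s" if "s \<in> S" for s using that S f_def by (simp add: f_inv_into_f)
  have finj: "inj_on f S" by (metis fg inj_onI)
  define dl where "dl = (\<lambda>q x. f (d (g q) x))"
  have step: "foldl dl (f s) w = f (foldl d s w) \<and> foldl d s w \<in> S"
    if "s \<in> S" "w \<in> lists G" for s w
    using that
  proof (induction w arbitrary: s)
    case Nil then show ?case by simp
  next
    case (Cons x w)
    have "d s x \<in> S" using Cons cl by auto
    moreover have "dl (f s) x = f (d s x)" using Cons by (simp add: dl_def fg)
    ultimately show ?case using Cons by simp
  qed
  show ?thesis unfolding regular_lang_def
  proof (intro exI conjI)
    show "finite (f ` S)" using fin by simp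
    show "f sI \<in> f ` S" using sI by simp
    show "f ` {s \<in> S. acc s} \<subseteq> f ` S" by auto
    show "\<forall>q\<in>f ` S. \<forall>a\<in>G. dl q a \<in> f ` S" using cl fg by (auto simp: dl_def)
    show "L = {w \<in> lists G. foldl dl (f sI) w \<in> f ` {s \<in> S. acc s}}"
    proof -
      have "foldl dl (f sI) w \<in> f ` {s \<in> S. acc s} \<longleftrightarrow> acc (foldl d sI w)" if "w \<in> lists G" for w
      proof -
        have 1: "foldl dl (f sI) w = f (foldl d sI w)" "foldl d sI w \<in> S" using step[OF sI that] by auto
        show ?thesis unfolding 1 using 1(2) finj by (auto dest: inj_onD)
      qed
      then show ?thesis using L by auto
    qed
  qed
qed

lemma deltaR_simps[simp]:
  "deltaR [] [] = []"
  "deltaR (x#xs) (y#ys) = (Some x, Some y) # deltaR xs ys"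
  "deltaR [] (y#ys) = (None, Some y) # deltaR [] ys"
  "deltaR (x#xs) [] = (Some x, None) # deltaR xs []"
  by (simp_all add: deltaR_def padR_def Let_def max_def)

lemma Some_img_iff[simp]: "Some a \<in> Some ` S \<longleftrightarrow> a \<in> S" by auto

lemma deltaR_lists1: "deltaR u [] \<in> lists (insert None (Some ` S) \<times> insert None (Some ` S)) \<longleftrightarrow> u \<in> lists S"
  by (induction u) simp_all
lemma deltaR_lists2: "deltaR [] u \<in> lists (insert None (Some ` S) \<times> insert None (Some ` S)) \<longleftrightarrow> u \<in> lists S"
  by (induction u) simp_all
lemma deltaR_lists:
  "deltaR u v \<in> lists (insert None (Some ` S) \<times> insert None (Some ` S)) \<longleftrightarrow> u \<in> lists S \<and> v \<in> lists S"
  by (induction u v rule: list_induct2') (simp_all add: deltaR_lists1[simplified] deltaR_lists2[simplified] conj_ac)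



fun validT :: "nat \<Rightarrow> nat list list \<Rightarrow> bool" where
  "validT lo [] = True"
| "validT lo (c # cs) = (c \<noteq> [] \<and> sorted c \<and> lo < hd c \<and> validT (hd c) cs)"

definition readT :: "nat list list \<Rightarrow> nat list" where
  "readT T = concat (map rev T)"

definition gT :: "nat \<Rightarrow> nat list \<Rightarrow> bool" where
  "gT lo u \<longleftrightarrow> (\<exists>T. validT lo T \<and> u = readT T)"

fun gd :: "nat \<Rightarrow> nat \<Rightarrow> nat list \<Rightarrow> bool" where
  "gd b c [] = (b < c)"
| "gd b c (x # xs) = (if x \<le> c then gd b x xs else b < c \<and> gd c x xs)"

fun goodL :: "nat list \<Rightarrow> bool" where
  "goodL [] = True"
| "goodL (x # xs) = gd 0 x xs"

lemma readT_simps[simp]: "readT [] = []" "readT (c # cs) = rev c @ readT cs"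
  by (simp_all add: readT_def)

lemma sorted_hd_last: "sorted c \<Longrightarrow> c \<noteq> [] \<Longrightarrow> hd c \<le> last c"
  by (induction c) (auto simp: sorted_wrt_append)

lemma validT_mono: "validT lo T \<Longrightarrow> lo' \<le> lo \<Longrightarrow> validT lo' T"
  by (cases T) auto

lemma validT_elems: "validT lo T \<Longrightarrow> x \<in> set (readT T) \<Longrightarrow> lo < x"
proof (induction lo T rule: validT.induct)
  case (2 lo c cs)
  have h: "hd c \<le> y" if "y \<in> set c" for y
    using that 2(2) by (cases c) auto
  show ?case using 2 h by (auto dest: h intro: less_le_trans)
qed simp

lemma gT_hd: assumes "gT j (x # xs)" shows "j < x"
proof -
  obtain T where "validT j T" "x # xs = readT T" using assms gT_def by auto
  then show ?thesis using validT_elems[of j T x] by (metis list.set_intros(1))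
qed

lemma gT_Nil[simp]: "gT lo []"
  unfolding gT_def by (auto intro: exI[of _ "[]"])

lemma gT_intro:
  assumes "sorted_wrt (\<ge>) (x # r)" "lo < last (x # r)" "gT (last (x # r)) rest"
  shows "gT lo (x # r @ rest)"
proof -
  obtain T where T: "validT (last (x # r)) T" "rest = readT T" using assms(3) gT_def by auto
  have s: "sorted (rev (x # r))" using assms(1) by (simp only: sorted_wrt_rev)
  have h: "hd (rev (x # r)) = last (x # r)" by (rule hd_rev)
  have "validT lo (rev (x # r) # T)"
    using assms T s unfolding validT.simps h by simp
  moreover have "x # r @ rest = readT (rev (x # r) # T)" using T by simp
  ultimately show ?thesis unfolding gT_def by blast
qed

lemma gT_elim:
  assumes "gT lo (x # xs)"
  shows "\<exists>r rest. xs = r @ rest \<and> sorted_wrt (\<ge>) (x # r) \<and> lo < last (x # r) \<and> gT (last (x # r)) rest"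
proof -
  obtain T where T: "validT lo T" "x # xs = readT T" using assms gT_def by auto
  have "T \<noteq> []" using T by auto
  then obtain c cs where c: "T = c # cs" by (cases T) auto
  have cne: "c \<noteq> []" using T c by simp
  then obtain r where r: "rev c = x # r"
    using T c by (cases "rev c") auto
  have "xs = r @ readT cs" using T c r by simp
  moreover have "sorted_wrt (\<ge>) (x # r)" using T c r
    by (metis sorted_wrt_rev rev_rev_ident validT.simps(2))
  moreover have "last (x # r) = hd c" using r
    by (metis hd_rev rev_rev_ident)
  moreover have "lo < hd c" "gT (hd c) (readT cs)" using T c gT_def by auto
  ultimately show ?thesis by metis
qed


lemma gd_iff:
  "gd b c u \<longleftrightarrow> (\<exists>r rest. u = r @ rest \<and> sorted_wrt (\<ge>) (c # r) \<and> b < last (c # r) \<and> gT (last (c # r)) rest)"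
proof (induction u arbitrary: b c)
  case Nil
  then show ?case by auto
next
  case (Cons x xs)
  show ?case
  proof (cases "x \<le> c")
    case True
    have "gd b c (x # xs) = gd b x xs" using True by simp
    also have "\<dots> \<longleftrightarrow> (\<exists>r rest. x # xs = r @ rest \<and> sorted_wrt (\<ge>) (c # r) \<and> b < last (c # r) \<and> gT (last (c # r)) rest)"
      (is "_ \<longleftrightarrow> ?R")
    proof
      assume "gd b x xs"
      then obtain r rest where "xs = r @ rest" "sorted_wrt (\<ge>) (x # r)" "b < last (x # r)" "gT (last (x # r)) rest"
        using Cons.IH by blast
      then show ?R using True
        by (intro exI[of _ "x # r"] exI[of _ rest]) auto
    next
      assume ?R
      then obtain r rest where R: "x # xs = r @ rest" "sorted_wrt (\<ge>) (c # r)" "b < last (c # r)" "gT (last (c # r)) rest"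
        by blast
      show "gd b x xs"
      proof (cases r)
        case Nil
        then have "gT c (x # xs)" using R by simp
        then have "c < x" by (rule gT_hd)
        then show ?thesis using True by simp
      next
        case (Cons y r')
        then have "y = x" "xs = r' @ rest" using R by auto
        then have "sorted_wrt (\<ge>) (x # r')" "b < last (x # r')" "gT (last (x # r')) rest"
          using R Cons by auto
        then show ?thesis using Cons.IH[of b x] \<open>xs = r' @ rest\<close> by blast
      qed
    qed
    finally show ?thesis .
  next
    case False
    have "gd b c (x # xs) = (b < c \<and> gd c x xs)" using False by simp
    also have "\<dots> \<longleftrightarrow> (b < c \<and> gT c (x # xs))"
    proof -
      have "gd c x xs \<longleftrightarrow> gT c (x # xs)"
      proof
        assume "gd c x xs"
        then obtain r rest where R: "xs = r @ rest" "sorted_wrt (\<ge>) (x # r)" "c < last (x # r)" "gT (last (x # r)) rest"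
          using Cons.IH[of c x] by blast
        show "gT c (x # xs)" using gT_intro[OF R(2-4)] R(1) by simp
      next
        assume "gT c (x # xs)"
        from gT_elim[OF this] obtain r rest where R: "xs = r @ rest" "sorted_wrt (\<ge>) (x # r)" "c < last (x # r)" "gT (last (x # r)) rest"
          by blast
        show "gd c x xs" using Cons.IH[of c x] R by blast
      qed
      then show ?thesis by simp
    qed
    also have "\<dots> \<longleftrightarrow> (\<exists>r rest. x # xs = r @ rest \<and> sorted_wrt (\<ge>) (c # r) \<and> b < last (c # r) \<and> gT (last (c # r)) rest)"
    proof
      assume "b < c \<and> gT c (x # xs)"
      then show "\<exists>r rest. x # xs = r @ rest \<and> sorted_wrt (\<ge>) (c # r) \<and> b < last (c # r) \<and> gT (last (c # r)) rest"
        by (intro exI[of _ "[]"] exI[of _ "x # xs"]) auto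
    next
      assume "\<exists>r rest. x # xs = r @ rest \<and> sorted_wrt (\<ge>) (c # r) \<and> b < last (c # r) \<and> gT (last (c # r)) rest"
      then obtain r rest where R: "x # xs = r @ rest" "sorted_wrt (\<ge>) (c # r)" "b < last (c # r)" "gT (last (c # r)) rest"
        by blast
      have "r = []"
      proof (rule ccontr)
        assume "r \<noteq> []"
        then obtain y r' where "r = y # r'" by (cases r) auto
        then show False using R False by auto
      qed
      then show "b < c \<and> gT c (x # xs)" using R by simp
    qed
    finally show ?thesis .
  qed
qed

lemma gd_gT: "gd b x xs \<longleftrightarrow> gT b (x # xs)"
proof
  assume "gd b x xs"
  then obtain r rest where R: "xs = r @ rest" "sorted_wrt (\<ge>) (x # r)" "b < last (x # r)" "gT (last (x # r)) rest"
    using gd_iff[of b x] by blast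
  show "gT b (x # xs)" using gT_intro[OF R(2-4)] R(1) by simp
next
  assume "gT b (x # xs)"
  from gT_elim[OF this] obtain r rest where R: "xs = r @ rest" "sorted_wrt (\<ge>) (x # r)" "b < last (x # r)" "gT (last (x # r)) rest"
    by blast
  show "gd b x xs" using gd_iff[of b x] R by blast
qed

lemma goodL_iff: "goodL u \<longleftrightarrow> gT 0 u"
  by (cases u) (simp_all add: gd_gT)



lemma LC1: "sorted_wrt (<) ks \<Longrightarrow> sorted (concat (map (\<lambda>i. replicate (e i) i) ks))"
proof (induction ks)
  case Nil then show ?case by simp
next
  case (Cons i ks)
  have "\<forall>y\<in>set (concat (map (\<lambda>i. replicate (e i) i) ks)). i \<le> y"
    using Cons.prems by auto
  then show ?case using Cons by (auto simp: sorted_append)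
qed

lemma LC2: "sorted c \<Longrightarrow> \<forall>x\<in>set c. x \<le> m \<Longrightarrow> c = filter (\<lambda>x. x < m) c @ replicate (count_list c m) m"
proof (induction c)
  case Nil then show ?case by simp
next
  case (Cons x c)
  show ?case
  proof (cases "x = m")
    case True
    then have "\<forall>y\<in>set c. y = m" using Cons.prems by force
    then have "c = replicate (length c) m" by (simp add: replicate_length_same)
    moreover have "count_list c m = length c" "filter (\<lambda>x. x < m) c = []"
      using \<open>\<forall>y\<in>set c. y = m\<close> by (induction c) auto
    ultimately show ?thesis using True by simp
  next
    case False
    then have "x < m" using Cons.prems by auto
    then show ?thesis using Cons False by auto
  qed
qed

lemma LC3: "sorted c \<Longrightarrow> set c \<subseteq> {j..<m} \<Longrightarrow> c = concat (map (\<lambda>i. replicate (count_list c i) i) [j..<m])"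
proof (induction m arbitrary: c)
  case 0 then show ?case by simp
next
  case (Suc m)
  show ?case
  proof (cases "j \<le> m")
    case False
    then have "c = []" using Suc.prems by auto
    then show ?thesis by simp
  next
    case True
    define c' where "c' = filter (\<lambda>x. x < m) c"
    have e: "c = c' @ replicate (count_list c m) m"
      using LC2[of c m] Suc.prems unfolding c'_def by force
    have "sorted c'" "set c' \<subseteq> {j..<m}" using Suc.prems unfolding c'_def
      by (auto simp: sorted_wrt_filter)
    then have IH: "c' = concat (map (\<lambda>i. replicate (count_list c' i) i) [j..<m])"
      using Suc.IH by blast
    have meq: "map (\<lambda>i. replicate (count_list c' i) i) [j..<m] = map (\<lambda>i. replicate (count_list c i) i) [j..<m]"
    proof (rule map_cong[OF refl])
      fix i assume "i \<in> set [j..<m]"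
      then have "i < m" by simp
      then have "count_list c i = count_list c' i"
        by (subst e) (simp add: count_list_0_iff)
      then show "replicate (count_list c' i) i = replicate (count_list c i) i" by simp
    qed
    then have "c = concat (map (\<lambda>i. replicate (count_list c i) i) [j..<m]) @ replicate (count_list c m) m"
      using e IH meq by metis
    then show ?thesis using True by simp
  qed
qed

lemma Lcol_alt: "Lcol n j = {rev (concat (map (\<lambda>i. replicate (e i) i) [j..<Suc n])) | e. 1 \<le> e j}"
  unfolding Lcol_def by (simp add: rev_concat rev_map o_def)

lemma LC: assumes "j \<le> n"
  shows "w \<in> Lcol n j \<longleftrightarrow> (\<exists>c. w = rev c \<and> c \<noteq> [] \<and> sorted c \<and> hd c = j \<and> set c \<subseteq> {..n})"
proof
  assume "w \<in> Lcol n j"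
  then obtain e where e: "1 \<le> e j" "w = rev (concat (map (\<lambda>i. replicate (e i) i) [j..<Suc n]))"
    unfolding Lcol_alt by blast
  define c where "c = concat (map (\<lambda>i. replicate (e i) i) [j..<Suc n])"
  have up: "[j..<Suc n] = j # [Suc j..<Suc n]" using assms upt_conv_Cons by auto
  have "c = replicate (e j) j @ concat (map (\<lambda>i. replicate (e i) i) [Suc j..<Suc n])"
    unfolding c_def by (subst up) simp
  moreover obtain k where "e j = Suc k" using e(1) by (cases "e j") auto
  ultimately have "c \<noteq> [] \<and> hd c = j" by simp
  moreover have "sorted c" unfolding c_def by (rule LC1) (rule sorted_wrt_upt)
  moreover have "set c \<subseteq> {..n}" unfolding c_def by auto
  ultimately show "\<exists>c. w = rev c \<and> c \<noteq> [] \<and> sorted c \<and> hd c = j \<and> set c \<subseteq> {..n}"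
    using e(2) unfolding c_def[symmetric] by blast
next
  assume "\<exists>c. w = rev c \<and> c \<noteq> [] \<and> sorted c \<and> hd c = j \<and> set c \<subseteq> {..n}"
  then obtain c where c: "w = rev c" "c \<noteq> []" "sorted c" "hd c = j" "set c \<subseteq> {..n}" by blast
  have "set c \<subseteq> {j..<Suc n}"
  proof
    fix x assume "x \<in> set c"
    then have "j \<le> x" using c by (cases c) auto
    then show "x \<in> {j..<Suc n}" using c \<open>x \<in> set c\<close> by auto
  qed
  then have "c = concat (map (\<lambda>i. replicate (count_list c i) i) [j..<Suc n])"
    using LC3 c(3) by blast
  moreover have "1 \<le> count_list c j"
    using c(2,4) count_list_0_iff[of c j] by (cases c) auto
  ultimately show "w \<in> Lcol n j" unfolding Lcol_alt using c(1) by (intro CollectI exI[of _ "count_list c"]) simp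
qed

lemma M: "sorted_wrt (<) js \<Longrightarrow> \<forall>j\<in>set js. lo < j \<and> j \<le> n \<Longrightarrow>
  concL (map (Lcol n) js) = readT ` {T. validT lo T \<and> map hd T = js \<and> set (concat T) \<subseteq> {..n}}"
proof (induction js arbitrary: lo)
  case Nil
  have "{T. validT lo T \<and> map hd T = [] \<and> set (concat T) \<subseteq> {..n}} = {[]}" by auto
  then show ?case by simp
next
  case (Cons j js)
  have IH: "concL (map (Lcol n) js) = readT ` {T. validT j T \<and> map hd T = js \<and> set (concat T) \<subseteq> {..n}}"
    using Cons by auto
  have jn: "j \<le> n" "lo < j" using Cons.prems by auto
  show ?case
  proof
    show "concL (map (Lcol n) (j # js)) \<subseteq> readT ` {T. validT lo T \<and> map hd T = j # js \<and> set (concat T) \<subseteq> {..n}}"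
    proof
      fix w assume "w \<in> concL (map (Lcol n) (j # js))"
      then obtain u v where uv: "w = u @ v" "u \<in> Lcol n j" "v \<in> concL (map (Lcol n) js)" by auto
      obtain c where c: "u = rev c" "c \<noteq> []" "sorted c" "hd c = j" "set c \<subseteq> {..n}"
        using uv(2) unfolding LC[OF jn(1)] by blast
      obtain T where T: "v = readT T" "validT j T" "map hd T = js" "set (concat T) \<subseteq> {..n}"
        using uv(3) unfolding IH by blast
      have "validT lo (c # T) \<and> map hd (c # T) = j # js \<and> set (concat (c # T)) \<subseteq> {..n}"
        using c T jn by auto
      moreover have "w = readT (c # T)" using uv c T by simp
      ultimately show "w \<in> readT ` {T. validT lo T \<and> map hd T = j # js \<and> set (concat T) \<subseteq> {..n}}"
        by (intro image_eqI[of _ _ "c # T"]) auto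
    qed
  next
    show "readT ` {T. validT lo T \<and> map hd T = j # js \<and> set (concat T) \<subseteq> {..n}} \<subseteq> concL (map (Lcol n) (j # js))"
    proof
      fix w assume "w \<in> readT ` {T. validT lo T \<and> map hd T = j # js \<and> set (concat T) \<subseteq> {..n}}"
      then obtain T where T0: "w = readT T" "T \<in> {T. validT lo T \<and> map hd T = j # js \<and> set (concat T) \<subseteq> {..n}}" by (erule imageE)
      then have T: "w = readT T" "validT lo T" "map hd T = j # js" "set (concat T) \<subseteq> {..n}" by (simp_all only: mem_Collect_eq)
      then obtain c T' where cT: "T = c # T'" by (cases T) auto
      have c: "c \<noteq> []" "sorted c" "hd c = j" "set c \<subseteq> {..n}" using T cT by auto
      have "rev c \<in> Lcol n j" using LC[OF jn(1)] c by blast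
      moreover have "readT T' \<in> concL (map (Lcol n) js)" unfolding IH using T cT c by auto
      ultimately show "w \<in> concL (map (Lcol n) (j # js))" using T cT by auto
    qed
  qed
qed

lemma validT_heads: "validT lo T \<Longrightarrow> sorted_wrt (<) (map hd T) \<and> (\<forall>h\<in>set (map hd T). lo < h)"
  by (induction lo T rule: validT.induct) auto

lemma validT_ne: "validT lo T \<Longrightarrow> \<forall>c\<in>set T. c \<noteq> []"
  by (induction lo T rule: validT.induct) auto

lemma set_readT: "set (readT T) = set (concat T)"
  by (induction T) auto

lemma Lrps_char: "Lrps n = {u. set u \<subseteq> {1..n} \<and> goodL u}"
proof -
  have A: "LB n B = readT ` {T. validT 0 T \<and> map hd T = sorted_list_of_set B \<and> set (concat T) \<subseteq> {..n}}"
    if "B \<subseteq> {1..n}" for B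
  proof -
    have fB: "finite B" using that finite_subset by blast
    have s1: "sorted_wrt (<) (sorted_list_of_set B)" by (rule strict_sorted_list_of_set)
    have s2: "\<forall>j\<in>set (sorted_list_of_set B). 0 < j \<and> j \<le> n"
      using that by (auto simp add: fB subset_iff)
    show ?thesis unfolding LB_def by (rule M[OF s1 s2])
  qed
  have "u \<in> Lrps n \<longleftrightarrow> (\<exists>T. validT 0 T \<and> set (concat T) \<subseteq> {..n} \<and> u = readT T)" for u
  proof
    assume "u \<in> Lrps n"
    then obtain B where B: "B \<subseteq> {1..n}" "u \<in> LB n B" unfolding Lrps_def by blast
    then have "u \<in> readT ` {T. validT 0 T \<and> map hd T = sorted_list_of_set B \<and> set (concat T) \<subseteq> {..n}}"
      using A[OF B(1)] by simp
    then obtain T where "u = readT T" "T \<in> {T. validT 0 T \<and> map hd T = sorted_list_of_set B \<and> set (concat T) \<subseteq> {..n}}"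
      by (erule imageE)
    then show "\<exists>T. validT 0 T \<and> set (concat T) \<subseteq> {..n} \<and> u = readT T" by blast
  next
    assume "\<exists>T. validT 0 T \<and> set (concat T) \<subseteq> {..n} \<and> u = readT T"
    then obtain T where T: "validT 0 T" "set (concat T) \<subseteq> {..n}" "u = readT T" by blast
    define B where "B = set (map hd T)"
    have hs: "sorted_wrt (<) (map hd T)" "\<forall>h\<in>set (map hd T). 0 < h" using validT_heads[OF T(1)] by auto
    have ne: "\<forall>c\<in>set T. c \<noteq> []"
      using T(1) validT_ne by blast
    have B1: "B \<subseteq> {1..n}"
    proof
      fix h assume hB: "h \<in> B"
      then obtain c where c: "c \<in> set T" "h = hd c" unfolding B_def by auto
      then have "h \<in> set c" using ne by simp
      then have "h \<in> set (concat T)" using c(1) by auto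
      then have "h \<le> n" using T(2) by auto
      moreover have "0 < h" using hs(2) hB B_def by blast
      ultimately show "h \<in> {1..n}" by simp
    qed
    have B2: "sorted_list_of_set B = map hd T"
      unfolding B_def sorted_list_of_set_sort_remdups using hs(1)
      by (simp add: strict_sorted_iff distinct_remdups_id sorted_sort_id)
    have "u \<in> LB n B" unfolding A[OF B1] B2 using T by blast
    then show "u \<in> Lrps n" unfolding Lrps_def using B1 by blast
  qed
  moreover have "(\<exists>T. validT 0 T \<and> set (concat T) \<subseteq> {..n} \<and> u = readT T) \<longleftrightarrow> set u \<subseteq> {1..n} \<and> goodL u" for u
  proof
    assume "\<exists>T. validT 0 T \<and> set (concat T) \<subseteq> {..n} \<and> u = readT T"
    then obtain T where T: "validT 0 T" "set (concat T) \<subseteq> {..n}" "u = readT T" by blast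
    have "set u \<subseteq> {1..n}"
    proof
      fix x assume "x \<in> set u"
      then have "0 < x" "x \<le> n" using validT_elems[OF T(1)] T(2,3) set_readT by auto
      then show "x \<in> {1..n}" by simp
    qed
    moreover have "goodL u" unfolding goodL_iff gT_def using T by blast
    ultimately show "set u \<subseteq> {1..n} \<and> goodL u" by blast
  next
    assume "set u \<subseteq> {1..n} \<and> goodL u"
    then obtain T where T: "validT 0 T" "u = readT T" "set u \<subseteq> {1..n}" unfolding goodL_iff gT_def by blast
    then have "set (concat T) \<subseteq> {..n}" using set_readT by auto
    then show "\<exists>T. validT 0 T \<and> set (concat T) \<subseteq> {..n} \<and> u = readT T" using T by blast
  qed
  ultimately show ?thesis by blast
qed



fun insR :: "nat \<Rightarrow> nat \<Rightarrow> nat list \<Rightarrow> nat list" where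
  "insR a c [] = [a]"
| "insR a c (x # xs) = (if c < x \<and> a \<le> c then a # x # xs else x # insR a x xs)"

fun ins0 :: "nat \<Rightarrow> nat list \<Rightarrow> nat list" where
  "ins0 a [] = [a]"
| "ins0 a (x # xs) = x # insR a x xs"

lemma set_insR: "set (insR a c u) = insert a (set u)"
  by (induction a c u rule: insR.induct) auto

lemma set_ins0: "set (ins0 a u) = insert a (set u)"
  by (cases u) (auto simp: set_insR)

lemma R1: "\<forall>c\<in>set T0. hd c < x \<Longrightarrow> rins T0 x = T0 @ [[x]]"
  by (induction T0) auto

lemma R2: "\<forall>c\<in>set T0. hd c < x \<Longrightarrow> x \<le> hd col \<Longrightarrow> rins (T0 @ [col]) x = T0 @ [x # col]"
  by (induction T0) auto

lemma R3: "c \<noteq> [] \<Longrightarrow> sorted c \<Longrightarrow> \<forall>c'\<in>set T0. hd c' < hd c \<Longrightarrow> foldl rins T0 (rev c) = T0 @ [c]"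
proof (induction c)
  case Nil then show ?case by simp
next
  case (Cons h t)
  show ?case
  proof (cases t)
    case Nil
    then show ?thesis using Cons.prems R1[of T0 h] by simp
  next
    case (Cons y t')
    have ht: "h \<le> hd t" using Cons.prems \<open>t = y # t'\<close> by simp
    have "foldl rins T0 (rev t) = T0 @ [t]"
      using Cons.IH Cons.prems \<open>t = y # t'\<close> ht by force
    then have "foldl rins T0 (rev (h # t)) = rins (T0 @ [t]) h" by simp
    also have "\<dots> = T0 @ [h # t]" using R2[of T0 h t] Cons.prems ht by simp
    finally show ?thesis .
  qed
qed

lemma T2: "validT lo T \<Longrightarrow> \<forall>c\<in>set T0. hd c \<le> lo \<Longrightarrow> foldl rins T0 (readT T) = T0 @ T"
proof (induction lo T arbitrary: T0 rule: validT.induct)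
  case (1 lo) then show ?case by simp
next
  case (2 lo c cs)
  have c: "c \<noteq> []" "sorted c" "lo < hd c" "validT (hd c) cs" using 2 by auto
  have "foldl rins T0 (rev c) = T0 @ [c]"
    using R3[OF c(1,2)] 2(3) c(3) by force
  then have "foldl rins T0 (readT (c # cs)) = foldl rins (T0 @ [c]) (readT cs)" by simp
  also have "\<dots> = (T0 @ [c]) @ cs"
  proof (rule 2(1)[OF c(4)])
    show "\<forall>ca\<in>set (T0 @ [c]). hd ca \<le> hd c" using 2(3) c(3) by force
  qed
  finally show ?case by simp
qed

lemma rR_readT: "validT 0 T \<Longrightarrow> rR (readT T) = T"
  unfolding rR_def using T2[of 0 T "[]"] by simp

lemma IR: "sorted_wrt (\<ge>) (p # r) \<Longrightarrow> (rest = [] \<or> last (p # r) < hd rest) \<Longrightarrow>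
  insR a p (r @ rest) = r @ (if a \<le> last (p # r) then a # rest else ins0 a rest)"
proof (induction r arbitrary: p)
  case Nil
  then show ?case by (cases rest) auto
next
  case (Cons y r)
  have "y \<le> p" using Cons.prems by simp
  then have "insR a p ((y # r) @ rest) = y # insR a y (r @ rest)" by auto
  moreover have "insR a y (r @ rest) = r @ (if a \<le> last (y # r) then a # rest else ins0 a rest)"
    using Cons.IH[of y] Cons.prems by auto
  ultimately show ?case by simp
qed

lemma T4: "validT lo T \<Longrightarrow> readT (rins T a) = ins0 a (readT T)"
proof (induction lo T rule: validT.induct)
  case (1 lo) then show ?case by simp
next
  case (2 lo c cs)
  have c: "c \<noteq> []" "sorted c" "lo < hd c" "validT (hd c) cs" using 2 by auto
  obtain x r where xr: "rev c = x # r" using c(1) by (cases "rev c") auto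
  have srt: "sorted_wrt (\<ge>) (x # r)" using c(2) xr
    by (metis sorted_wrt_rev rev_rev_ident)
  have lst: "last (x # r) = hd c" using xr by (metis hd_rev rev_rev_ident)
  have rest: "readT cs = [] \<or> last (x # r) < hd (readT cs)"
  proof (cases "readT cs")
    case (Cons z zs)
    have "gT (hd c) (z # zs)" using c(4) Cons unfolding gT_def by metis
    then show ?thesis using gT_hd Cons lst by auto
  qed simp
  have "ins0 a (readT (c # cs)) = x # r @ (if a \<le> hd c then a # readT cs else ins0 a (readT cs))"
    using IR[OF srt rest, of a] xr lst by simp
  then show ?case using 2(1)[OF c(4)] xr by auto
qed

lemma T5: "validT lo T \<Longrightarrow> lo < a \<Longrightarrow> validT lo (rins T a)"
proof (induction lo T rule: validT.induct)
  case (1 lo) then show ?case by simp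
next
  case (2 lo c cs)
  have c: "c \<noteq> []" "sorted c" "lo < hd c" "validT (hd c) cs" using 2 by auto
  show ?case
  proof (cases "a \<le> hd c")
    case True
    have "sorted (a # c)" using c(1,2) True by (cases c) auto
    moreover have "validT a cs" using validT_mono[OF c(4) True] .
    ultimately show ?thesis using True 2(3) by simp
  next
    case False
    then show ?thesis using 2 c by simp
  qed
qed

lemma F_ins: assumes "goodL u" "0 < a"
  shows "goodL (ins0 a u) \<and> rR (ins0 a u) = rR (u @ [a])"
proof -
  obtain T where T: "validT 0 T" "u = readT T" using assms(1) unfolding goodL_iff gT_def by blast
  have v: "validT 0 (rins T a)" using T5[OF T(1) assms(2)] .
  have e: "ins0 a u = readT (rins T a)" using T4[OF T(1)] T(2) by simp
  have "goodL (ins0 a u)" unfolding goodL_iff gT_def e using v by blast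
  moreover have "rR (ins0 a u) = rins T a" unfolding e using rR_readT[OF v] .
  moreover have "rR (u @ [a]) = rins T a" using rR_readT[OF T(1)] T(2) by (simp add: rR_def)
  ultimately show ?thesis by simp
qed

lemma F_inj: assumes "goodL u" "goodL v" "rR u = rR v" shows "u = v"
proof -
  obtain T where T: "validT 0 T" "u = readT T" using assms(1) unfolding goodL_iff gT_def by blast
  obtain T' where T': "validT 0 T'" "v = readT T'" using assms(2) unfolding goodL_iff gT_def by blast
  show ?thesis using assms(3) rR_readT[OF T(1)] rR_readT[OF T'(1)] T T' by simp
qed

lemma F_rep: "w \<in> lists {1..n} \<Longrightarrow> \<exists>u. set u \<subseteq> {1..n} \<and> goodL u \<and> rR u = rR w"
proof (induction w rule: rev_induct)
  case Nil then show ?case by (intro exI[of _ "[]"]) simp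
next
  case (snoc a w)
  then obtain u where u: "set u \<subseteq> {1..n}" "goodL u" "rR u = rR w" by auto
  have a: "a \<in> {1..n}" using snoc.prems by simp
  then have "0 < a" by simp
  have "goodL (ins0 a u)" "rR (ins0 a u) = rR (u @ [a])" using F_ins[OF u(2) \<open>0 < a\<close>] by auto
  moreover have "rR (u @ [a]) = rR (w @ [a])" using u(3) by (simp add: rR_def)
  moreover have "set (ins0 a u) \<subseteq> {1..n}" using u(1) a by (simp add: set_ins0)
  ultimately show ?case by metis
qed



datatype st1 = F1 | S1 | Q1 nat nat

fun d1 :: "st1 \<Rightarrow> nat \<Rightarrow> st1" where
  "d1 S1 x = Q1 0 x"
| "d1 (Q1 b c) x = (if x \<le> c then Q1 b x else if b < c then Q1 c x else F1)"
| "d1 F1 x = F1"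

fun f1 :: "st1 \<Rightarrow> bool" where
  "f1 S1 = True" | "f1 (Q1 b c) = (b < c)" | "f1 F1 = False"

lemma d1_F[simp]: "foldl d1 F1 w = F1" by (induction w) auto

lemma d1_Q: "f1 (foldl d1 (Q1 b c) w) = gd b c w"
  by (induction w arbitrary: b c) auto

lemma d1_S: "f1 (foldl d1 S1 w) = goodL w"
  by (cases w) (auto simp: d1_Q)

datatype st2 = F2 | S2 | Q2 nat nat

fun d2 :: "st2 \<Rightarrow> nat option \<times> nat option \<Rightarrow> st2" where
  "d2 S2 (Some x, Some y) = (if x = y then Q2 0 x else F2)"
| "d2 (Q2 b c) (Some x, Some y) = (if x = y then (if x \<le> c then Q2 b x else if b < c then Q2 c x else F2) else F2)"
| "d2 _ _ = F2"

fun f2 :: "st2 \<Rightarrow> bool" where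
  "f2 S2 = True" | "f2 (Q2 b c) = (b < c)" | "f2 F2 = False"

lemma d2_F[simp]: "foldl d2 F2 w = F2" by (induction w) auto

lemma ex2_Nil: "(\<exists>u. P u \<and> [] = deltaR u u) \<longleftrightarrow> P []"
proof
  assume "\<exists>u. P u \<and> [] = deltaR u u"
  then obtain u where "P u" "[] = deltaR u u" by blast
  then show "P []" by (cases u) auto
qed (intro exI[of _ "[]"], simp)

lemma ex2_Cons: "(\<exists>u. P u \<and> z # w = deltaR u u) \<longleftrightarrow> (\<exists>x u'. z = (Some x, Some x) \<and> w = deltaR u' u' \<and> P (x # u'))"
proof
  assume "\<exists>u. P u \<and> z # w = deltaR u u"
  then obtain u where "P u" "z # w = deltaR u u" by blast
  then show "\<exists>x u'. z = (Some x, Some x) \<and> w = deltaR u' u' \<and> P (x # u')" by (cases u) auto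
qed auto

lemma d2_Q: "f2 (foldl d2 (Q2 b c) w) \<longleftrightarrow> (\<exists>u. gd b c u \<and> w = deltaR u u)"
proof (induction w arbitrary: b c)
  case Nil then show ?case by (simp add: ex2_Nil)
next
  case (Cons z w)
  obtain p q where z: "z = (p, q)" by (cases z)
  show ?case unfolding ex2_Cons z
    by (cases p; cases q) (auto simp: Cons.IH)
qed

lemma d2_S: "f2 (foldl d2 S2 w) \<longleftrightarrow> (\<exists>u. goodL u \<and> w = deltaR u u)"
proof (cases w)
  case Nil then show ?thesis by (simp add: ex2_Nil)
next
  case (Cons z w')
  obtain p q where z: "z = (p, q)" by (cases z)
  show ?thesis unfolding Cons ex2_Cons z
    by (cases p; cases q) (auto simp: d2_Q)
qed



datatype st3 = F3 | S3 | E3 | P1 nat nat | P2 nat nat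

fun d3 :: "nat \<Rightarrow> st3 \<Rightarrow> nat option \<times> nat option \<Rightarrow> st3" where
  "d3 a S3 (Some x, Some y) = (if y = x then P1 0 x else F3)"
| "d3 a S3 (None, Some y) = (if y = a then E3 else F3)"
| "d3 a (P1 b c) (Some x, Some y) = (if c < x \<and> a \<le> c then (if y = a \<and> b < c then P2 c x else F3)
     else if y = x then (if x \<le> c then P1 b x else if b < c then P1 c x else F3) else F3)"
| "d3 a (P1 b c) (None, Some y) = (if y = a \<and> b < c then E3 else F3)"
| "d3 a (P2 b c) (Some x, Some y) = (if y = c then (if x \<le> c then P2 b x else if b < c then P2 c x else F3) else F3)"
| "d3 a (P2 b c) (None, Some y) = (if y = c \<and> b < c then E3 else F3)"
| "d3 a _ _ = F3"

fun f3 :: "st3 \<Rightarrow> bool" where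
  "f3 E3 = True" | "f3 _ = False"

lemma d3_F[simp]: "foldl (d3 a) F3 w = F3" by (induction w) auto

lemma d3_E: "f3 (foldl (d3 a) E3 w) \<longleftrightarrow> w = []"
  by (cases w) auto

lemma exP2_Nil: "\<not> (\<exists>u. P u \<and> [] = deltaR u (c # u))"
proof
  assume "\<exists>u. P u \<and> [] = deltaR u (c # u)"
  then obtain u where "[] = deltaR u (c # u)" by blast
  then show False by (cases u) auto
qed

lemma exP2_Cons: "(\<exists>u. P u \<and> z # w = deltaR u (c # u)) \<longleftrightarrow>
   (z = (None, Some c) \<and> w = [] \<and> P []) \<or> (\<exists>x u'. z = (Some x, Some c) \<and> w = deltaR u' (x # u') \<and> P (x # u'))"
proof
  assume "\<exists>u. P u \<and> z # w = deltaR u (c # u)"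
  then obtain u where "P u" "z # w = deltaR u (c # u)" by blast
  then show "(z = (None, Some c) \<and> w = [] \<and> P []) \<or> (\<exists>x u'. z = (Some x, Some c) \<and> w = deltaR u' (x # u') \<and> P (x # u'))"
    by (cases u) auto
next
  assume "(z = (None, Some c) \<and> w = [] \<and> P []) \<or> (\<exists>x u'. z = (Some x, Some c) \<and> w = deltaR u' (x # u') \<and> P (x # u'))"
  then show "\<exists>u. P u \<and> z # w = deltaR u (c # u)"
  proof
    assume "z = (None, Some c) \<and> w = [] \<and> P []"
    then show ?thesis by (intro exI[of _ "[]"]) simp
  next
    assume "\<exists>x u'. z = (Some x, Some c) \<and> w = deltaR u' (x # u') \<and> P (x # u')"
    then obtain x u' where "z = (Some x, Some c)" "w = deltaR u' (x # u')" "P (x # u')" by blast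
    then show ?thesis by (intro exI[of _ "x # u'"]) simp
  qed
qed

lemma d3_P2: "f3 (foldl (d3 a) (P2 b c) w) \<longleftrightarrow> (\<exists>u. gd b c u \<and> w = deltaR u (c # u))"
proof (induction w arbitrary: b c)
  case Nil then show ?case using exP2_Nil by simp
next
  case (Cons z w)
  obtain p q where z: "z = (p, q)" by (cases z)
  show ?case unfolding exP2_Cons z
    by (cases p; cases q) (auto simp: Cons.IH d3_E)
qed

lemma exP1_Nil: "\<not> (\<exists>u. P u \<and> [] = deltaR u (insR a c u))"
proof
  assume "\<exists>u. P u \<and> [] = deltaR u (insR a c u)"
  then obtain u where "[] = deltaR u (insR a c u)" by blast
  then show False by (cases u) (auto split: if_splits)
qed

lemma exP1_Cons: "(\<exists>u. P u \<and> z # w = deltaR u (insR a c u)) \<longleftrightarrow>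
   (z = (None, Some a) \<and> w = [] \<and> P []) \<or>
   (\<exists>x u'. c < x \<and> a \<le> c \<and> z = (Some x, Some a) \<and> w = deltaR u' (x # u') \<and> P (x # u')) \<or>
   (\<exists>x u'. \<not> (c < x \<and> a \<le> c) \<and> z = (Some x, Some x) \<and> w = deltaR u' (insR a x u') \<and> P (x # u'))"
  (is "?L \<longleftrightarrow> ?A \<or> ?B \<or> ?C")
proof
  assume ?L
  then obtain u where "P u" "z # w = deltaR u (insR a c u)" by blast
  then show "?A \<or> ?B \<or> ?C"
    by (cases u) (auto split: if_splits)
next
  assume "?A \<or> ?B \<or> ?C"
  then show ?L
  proof (elim disjE)
    assume ?A
    then show ?thesis by (intro exI[of _ "[]"]) simp
  next
    assume ?B
    then obtain x u' where "c < x" "a \<le> c" "z = (Some x, Some a)" "w = deltaR u' (x # u')" "P (x # u')" by blast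
    then show ?thesis by (intro exI[of _ "x # u'"]) simp
  next
    assume ?C
    then obtain x u' where "\<not> (c < x \<and> a \<le> c)" "z = (Some x, Some x)" "w = deltaR u' (insR a x u')" "P (x # u')" by blast
    then show ?thesis by (intro exI[of _ "x # u'"]) simp
  qed
qed

lemma d3_P1: "f3 (foldl (d3 a) (P1 b c) w) \<longleftrightarrow> (\<exists>u. gd b c u \<and> w = deltaR u (insR a c u))"
proof (induction w arbitrary: b c)
  case Nil then show ?case using exP1_Nil by simp
next
  case (Cons z w)
  obtain p q where z: "z = (p, q)" by (cases z)
  have SS: "f3 (foldl (d3 a) (P1 b c) ((Some x, Some y) # w)) \<longleftrightarrow>
     (\<exists>x' u'. c < x' \<and> a \<le> c \<and> (Some x, Some y) = (Some x', Some a) \<and> w = deltaR u' (x' # u') \<and> gd b c (x' # u')) \<or>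
     (\<exists>x' u'. \<not> (c < x' \<and> a \<le> c) \<and> (Some x, Some y) = (Some x', Some x') \<and> w = deltaR u' (insR a x' u') \<and> gd b c (x' # u'))"
    for x y
  proof (cases "c < x \<and> a \<le> c")
    case True
    then show ?thesis by (simp add: d3_P2) blast
  next
    case False
    show ?thesis
    proof (cases "x \<le> c")
      case True
      then show ?thesis using False by (simp add: Cons.IH) blast
    next
      case F2: False
      then show ?thesis using False by (simp add: Cons.IH) blast
    qed
  qed
  show ?case unfolding exP1_Cons z
  proof (cases p)
    case None
    then show "f3 (foldl (d3 a) (P1 b c) ((p, q) # w)) = (((p, q) = (None, Some a) \<and> w = [] \<and> gd b c []) \<or>
     (\<exists>x u'. c < x \<and> a \<le> c \<and> (p, q) = (Some x, Some a) \<and> w = deltaR u' (x # u') \<and> gd b c (x # u')) \<or>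
     (\<exists>x u'. \<not> (c < x \<and> a \<le> c) \<and> (p, q) = (Some x, Some x) \<and> w = deltaR u' (insR a x u') \<and> gd b c (x # u')))"
      by (cases q) (auto simp: d3_E)
  next
    case (Some x)
    then show "f3 (foldl (d3 a) (P1 b c) ((p, q) # w)) = (((p, q) = (None, Some a) \<and> w = [] \<and> gd b c []) \<or>
     (\<exists>x u'. c < x \<and> a \<le> c \<and> (p, q) = (Some x, Some a) \<and> w = deltaR u' (x # u') \<and> gd b c (x # u')) \<or>
     (\<exists>x u'. \<not> (c < x \<and> a \<le> c) \<and> (p, q) = (Some x, Some x) \<and> w = deltaR u' (insR a x u') \<and> gd b c (x # u')))"
      using SS by (cases q) auto
  qed
qed

lemma d3_S: "f3 (foldl (d3 a) S3 w) \<longleftrightarrow> (\<exists>u. goodL u \<and> w = deltaR u (ins0 a u))"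
proof (cases w)
  case Nil
  have "\<not> (\<exists>u. goodL u \<and> [] = deltaR u (ins0 a u))"
  proof
    assume "\<exists>u. goodL u \<and> [] = deltaR u (ins0 a u)"
    then obtain u where "[] = deltaR u (ins0 a u)" by blast
    then show False by (cases u) auto
  qed
  then show ?thesis using Nil by simp
next
  case (Cons z w')
  obtain p q where z: "z = (p, q)" by (cases z)
  have "(\<exists>u. goodL u \<and> z # w' = deltaR u (ins0 a u)) \<longleftrightarrow>
     (z = (None, Some a) \<and> w' = []) \<or> (\<exists>x u'. z = (Some x, Some x) \<and> w' = deltaR u' (insR a x u') \<and> gd 0 x u')"
  proof
    assume "\<exists>u. goodL u \<and> z # w' = deltaR u (ins0 a u)"
    then obtain u where "goodL u" "z # w' = deltaR u (ins0 a u)" by blast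
    then show "(z = (None, Some a) \<and> w' = []) \<or> (\<exists>x u'. z = (Some x, Some x) \<and> w' = deltaR u' (insR a x u') \<and> gd 0 x u')"
      by (cases u) auto
  next
    assume "(z = (None, Some a) \<and> w' = []) \<or> (\<exists>x u'. z = (Some x, Some x) \<and> w' = deltaR u' (insR a x u') \<and> gd 0 x u')"
    then show "\<exists>u. goodL u \<and> z # w' = deltaR u (ins0 a u)"
    proof
      assume "z = (None, Some a) \<and> w' = []"
      then show ?thesis by (intro exI[of _ "[]"]) simp
    next
      assume "\<exists>x u'. z = (Some x, Some x) \<and> w' = deltaR u' (insR a x u') \<and> gd 0 x u'"
      then obtain x u' where "z = (Some x, Some x)" "w' = deltaR u' (insR a x u')" "gd 0 x u'" by blast
      then show ?thesis by (intro exI[of _ "x # u'"]) simp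
    qed
  qed
  then show ?thesis unfolding Cons z
    by (cases p; cases q) (auto simp: d3_E d3_P1)
qed



lemma img_Q1[simp]: "Q1 b c \<in> (\<lambda>(x, y). Q1 x y) ` A \<longleftrightarrow> (b, c) \<in> A" by force
lemma img_Q2[simp]: "Q2 b c \<in> (\<lambda>(x, y). Q2 x y) ` A \<longleftrightarrow> (b, c) \<in> A" by force
lemma img_P1[simp]: "P1 b c \<in> (\<lambda>(x, y). P1 x y) ` A \<longleftrightarrow> (b, c) \<in> A" by force
lemma img_P2[simp]: "P2 b c \<in> (\<lambda>(x, y). P2 x y) ` A \<longleftrightarrow> (b, c) \<in> A" by force

lemma dl_set: "deltaR u v \<in> lists (insert None (Some ` S) \<times> insert None (Some ` S)) \<longleftrightarrow> set u \<subseteq> S \<and> set v \<subseteq> S"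
  using deltaR_lists[of u v S] by (simp only: lists_eq_set mem_Collect_eq)

lemma LR_eps: "L_right rps_eq (Lrps n) [] = {(u, u) | u. u \<in> Lrps n}"
  unfolding L_right_def rps_eq_def Lrps_char using F_inj by auto

lemma LR_a: assumes "a \<in> {1..n}"
  shows "L_right rps_eq (Lrps n) [a] = {(u, ins0 a u) | u. u \<in> Lrps n}"
proof (rule set_eqI)
  fix p :: "nat list \<times> nat list"
  obtain u v where p: "p = (u, v)" by (cases p)
  have a0: "0 < a" using assms by simp
  show "p \<in> L_right rps_eq (Lrps n) [a] \<longleftrightarrow> p \<in> {(u, ins0 a u) | u. u \<in> Lrps n}"
  proof
    assume "p \<in> L_right rps_eq (Lrps n) [a]"
    then have uv: "u \<in> Lrps n" "v \<in> Lrps n" "rR (u @ [a]) = rR v"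
      unfolding L_right_def rps_eq_def p by auto
    have g: "goodL u" "goodL v" using uv(1,2) unfolding Lrps_char by auto
    have "goodL (ins0 a u)" "rR (ins0 a u) = rR v" using F_ins[OF g(1) a0] uv(3) by auto
    then have "v = ins0 a u" using F_inj g(2) by metis
    then show "p \<in> {(u, ins0 a u) | u. u \<in> Lrps n}" using p uv(1) by blast
  next
    assume "p \<in> {(u, ins0 a u) | u. u \<in> Lrps n}"
    then have uv: "u \<in> Lrps n" "v = ins0 a u" using p by auto
    have g: "goodL u" "set u \<subseteq> {1..n}" using uv(1) unfolding Lrps_char by auto
    have "goodL (ins0 a u)" "rR (ins0 a u) = rR (u @ [a])" using F_ins[OF g(1) a0] by auto
    moreover have "set (ins0 a u) \<subseteq> {1..n}" using g(2) assms by (simp add: set_ins0)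
    ultimately have "v \<in> Lrps n" "rR (u @ [a]) = rR v" using uv(2) unfolding Lrps_char by auto
    then show "p \<in> L_right rps_eq (Lrps n) [a]"
      unfolding L_right_def rps_eq_def p using uv(1) by auto
  qed
qed

theorem theorem6p3:
  fixes n :: nat
  shows "automatic_structure (alphA n) rps_eq (Lrps n)"
proof -
  let ?S = "{1..n} :: nat set"
  let ?G = "insert None (Some ` ?S) \<times> insert None (Some ` ?S)"
  have Lsub: "Lrps n \<subseteq> lists ?S" unfolding Lrps_char by auto
  have regL: "regular_lang ?S (Lrps n)"
  proof (rule regI[where S = "{F1, S1} \<union> (\<lambda>(b, c). Q1 b c) ` ({..n} \<times> {..n})" and d = d1 and sI = S1 and acc = f1])
    show "finite ({F1, S1} \<union> (\<lambda>(b, c). Q1 b c) ` ({..n} \<times> {..n}))" by simp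
    show "S1 \<in> {F1, S1} \<union> (\<lambda>(b, c). Q1 b c) ` ({..n} \<times> {..n})" by simp
    show "\<forall>s\<in>{F1, S1} \<union> (\<lambda>(b, c). Q1 b c) ` ({..n} \<times> {..n}). \<forall>x\<in>?S. d1 s x \<in> {F1, S1} \<union> (\<lambda>(b, c). Q1 b c) ` ({..n} \<times> {..n})"
      by auto
    show "Lrps n = {w \<in> lists ?S. f1 (foldl d1 S1 w)}"
      unfolding Lrps_char d1_S by auto
  qed
  have rep: "\<forall>w\<in>lists ?S. \<exists>u\<in>Lrps n. rps_eq u w"
    using F_rep unfolding Lrps_char rps_eq_def by blast
  have reg_eps: "regular_lang ?G ((\<lambda>(u, v). deltaR u v) ` L_right rps_eq (Lrps n) [])"
  proof (rule regI[where S = "{F2, S2} \<union> (\<lambda>(b, c). Q2 b c) ` ({..n} \<times> {..n})" and d = d2 and sI = S2 and acc = f2])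
    show "finite ({F2, S2} \<union> (\<lambda>(b, c). Q2 b c) ` ({..n} \<times> {..n}))" by simp
    show "S2 \<in> {F2, S2} \<union> (\<lambda>(b, c). Q2 b c) ` ({..n} \<times> {..n})" by simp
    show "\<forall>s\<in>{F2, S2} \<union> (\<lambda>(b, c). Q2 b c) ` ({..n} \<times> {..n}). \<forall>x\<in>?G. d2 s x \<in> {F2, S2} \<union> (\<lambda>(b, c). Q2 b c) ` ({..n} \<times> {..n})"
    proof (intro ballI)
      fix s x assume s: "s \<in> {F2, S2} \<union> (\<lambda>(b, c). Q2 b c) ` ({..n} \<times> {..n})" and x: "x \<in> ?G"
      obtain p q where pq: "x = (p, q)" by (cases x)
      show "d2 s x \<in> {F2, S2} \<union> (\<lambda>(b, c). Q2 b c) ` ({..n} \<times> {..n})"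
        using s x unfolding pq by (cases p; cases q) (auto split: if_splits)
    qed
    show "(\<lambda>(u, v). deltaR u v) ` L_right rps_eq (Lrps n) [] = {w \<in> lists ?G. f2 (foldl d2 S2 w)}"
    proof (rule set_eqI)
      fix w
      have "w \<in> (\<lambda>(u, v). deltaR u v) ` L_right rps_eq (Lrps n) [] \<longleftrightarrow> (\<exists>u. u \<in> Lrps n \<and> w = deltaR u u)"
        unfolding LR_eps by auto
      also have "\<dots> \<longleftrightarrow> w \<in> lists ?G \<and> (\<exists>u. goodL u \<and> w = deltaR u u)"
        unfolding Lrps_char mem_Collect_eq using dl_set[of _ _ ?S] by metis
      also have "\<dots> \<longleftrightarrow> w \<in> {w \<in> lists ?G. f2 (foldl d2 S2 w)}" using d2_S by simp
      finally show "w \<in> (\<lambda>(u, v). deltaR u v) ` L_right rps_eq (Lrps n) [] \<longleftrightarrow> w \<in> {w \<in> lists ?G. f2 (foldl d2 S2 w)}" .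
    qed
  qed
  have reg_a: "regular_lang ?G ((\<lambda>(u, v). deltaR u v) ` L_right rps_eq (Lrps n) [a])" if a: "a \<in> ?S" for a
  proof (rule regI[where S = "{F3, S3, E3} \<union> (\<lambda>(b, c). P1 b c) ` ({..n} \<times> {..n}) \<union> (\<lambda>(b, c). P2 b c) ` ({..n} \<times> {..n})"
        and d = "d3 a" and sI = S3 and acc = f3])
    show "finite ({F3, S3, E3} \<union> (\<lambda>(b, c). P1 b c) ` ({..n} \<times> {..n}) \<union> (\<lambda>(b, c). P2 b c) ` ({..n} \<times> {..n}))" by simp
    show "S3 \<in> {F3, S3, E3} \<union> (\<lambda>(b, c). P1 b c) ` ({..n} \<times> {..n}) \<union> (\<lambda>(b, c). P2 b c) ` ({..n} \<times> {..n})" by simp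
    show "\<forall>s\<in>{F3, S3, E3} \<union> (\<lambda>(b, c). P1 b c) ` ({..n} \<times> {..n}) \<union> (\<lambda>(b, c). P2 b c) ` ({..n} \<times> {..n}). \<forall>x\<in>?G.
       d3 a s x \<in> {F3, S3, E3} \<union> (\<lambda>(b, c). P1 b c) ` ({..n} \<times> {..n}) \<union> (\<lambda>(b, c). P2 b c) ` ({..n} \<times> {..n})"
    proof (intro ballI)
      fix s x assume s: "s \<in> {F3, S3, E3} \<union> (\<lambda>(b, c). P1 b c) ` ({..n} \<times> {..n}) \<union> (\<lambda>(b, c). P2 b c) ` ({..n} \<times> {..n})"
        and x: "x \<in> ?G"
      obtain p q where pq: "x = (p, q)" by (cases x)
      show "d3 a s x \<in> {F3, S3, E3} \<union> (\<lambda>(b, c). P1 b c) ` ({..n} \<times> {..n}) \<union> (\<lambda>(b, c). P2 b c) ` ({..n} \<times> {..n})"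
        using s x unfolding pq by (cases p; cases q) (auto split: if_splits)
    qed
    show "(\<lambda>(u, v). deltaR u v) ` L_right rps_eq (Lrps n) [a] = {w \<in> lists ?G. f3 (foldl (d3 a) S3 w)}"
    proof (rule set_eqI)
      fix w
      have "w \<in> (\<lambda>(u, v). deltaR u v) ` L_right rps_eq (Lrps n) [a] \<longleftrightarrow> (\<exists>u. u \<in> Lrps n \<and> w = deltaR u (ins0 a u))"
        unfolding LR_a[OF a] by auto
      also have "\<dots> \<longleftrightarrow> w \<in> lists ?G \<and> (\<exists>u. goodL u \<and> w = deltaR u (ins0 a u))"
      proof -
        have "set (ins0 a u) \<subseteq> ?S \<longleftrightarrow> set u \<subseteq> ?S" for u using a set_ins0[of a u] by auto
        then show ?thesis unfolding Lrps_char mem_Collect_eq using dl_set[of _ _ ?S] by metis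
      qed
      also have "\<dots> \<longleftrightarrow> w \<in> {w \<in> lists ?G. f3 (foldl (d3 a) S3 w)}" using d3_S by simp
      finally show "w \<in> (\<lambda>(u, v). deltaR u v) ` L_right rps_eq (Lrps n) [a] \<longleftrightarrow> w \<in> {w \<in> lists ?G. f3 (foldl (d3 a) S3 w)}" .
    qed
  qed
  show ?thesis unfolding automatic_structure_def
    using Lsub regL rep reg_eps reg_a by auto
qed

end
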